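(* Let $M^*\in[0,1]^{n_1\times n_2}$ have non-decreasing columns (i.e. $M^*_{i,j}\le M^*_{i+1,j}$), let $N>0$, $\zeta\ge0$, let $B$ be a nonempty subset of $[n_2]$ and \[ \eta_B=16(\zeta+1)\Big(\sqrt{\frac{|B|n_1n_2}{N}\log(n_1n_2)}+\frac{n_1n_2}{N}\log(n_1n_2)\Big). \] Suppose $\widehat\pi$ is a topological sort of a directed graph $G$ on $[n_1]$ in which an edge $u\to v$ is present whenever $\sum_{\ell\in B}M^*_{v,\ell}-\sum_{\ell\in B}M^*_{u,\ell}>2\eta_B$. Then for all $i\in[n_1]$, \[ \sum_{j\in B}|M^*_{\widehat\pi(i),j}-M^*_{i,j}|\le96(\zeta+1)\sqrt{\frac{n_1n_2}{N}|B|\log(n_1n_2)}. \]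
   Context: A permutation $\pi$ of $[n_1]$ is a topological sort of a directed graph $G$ on $[n_1]$ if $\pi(u)<\pi(v)$ for every directed edge $u\to v$. Logarithms natural. *)

theory Defs
  imports Complex_Main
begin

definition topological_sort :: "nat \<Rightarrow> (nat \<Rightarrow> nat \<Rightarrow> bool) \<Rightarrow> (nat \<Rightarrow> nat) \<Rightarrow> bool" where
  "topological_sort n G \<pi> \<longleftrightarrow>
     bij_betw \<pi> {1..n} {1..n} \<and> (\<forall>u\<in>{1..n}. \<forall>v\<in>{1..n}. G u v \<longrightarrow> \<pi> u < \<pi> v)"

end

theory Submission
  imports Defs
begin

lemma mono_col:
  fixes M :: "nat \<Rightarrow> nat \<Rightarrow> real" and i k n1 n2 :: nat
  assumes cm: "\<forall>i j. 1 \<le> i \<and> i < n1 \<and> j \<in> {1..n2} \<longrightarrow> M i j \<le> M (i + 1) j"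
    and "1 \<le> i" "i \<le> k" "k \<le> n1" "j \<in> {1..n2}"
  shows "M i j \<le> (M k j :: real)"
  using assms(3,4)
proof (induction k rule: dec_induct)
  case base then show ?case by simp
next
  case (step m)
  then have "M m j \<le> M (m+1) j" using cm assms(2,5) by auto
  with step show ?case by simp
qed

lemma sum_abs_mono:
  fixes M :: "nat \<Rightarrow> nat \<Rightarrow> real" and i k n1 n2 :: nat
  assumes cm: "\<forall>i j. 1 \<le> i \<and> i < n1 \<and> j \<in> {1..n2} \<longrightarrow> M i j \<le> M (i + 1) j"
    and "1 \<le> i" "i \<le> k" "k \<le> n1" "B \<subseteq> {1..n2}"
  shows "(\<Sum>j\<in>B. \<bar>M k j - M i j\<bar>) = (\<Sum>j\<in>B. M k j) - (\<Sum>j\<in>B. (M i j :: real))"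
proof -
  have "(\<Sum>j\<in>B. \<bar>M k j - M i j\<bar>) = (\<Sum>j\<in>B. M k j - M i j)"
    apply (rule sum.cong, simp)
    using mono_col[OF cm assms(2,3,4)] assms(5) by force
  then show ?thesis by (simp add: sum_subtractf)
qed

theorem lemma10:
  fixes M :: "nat \<Rightarrow> nat \<Rightarrow> real" and n1 n2 :: nat and N \<zeta> :: real
    and B :: "nat set" and G :: "nat \<Rightarrow> nat \<Rightarrow> bool" and \<pi> :: "nat \<Rightarrow> nat"
  assumes range01: "\<forall>i\<in>{1..n1}. \<forall>j\<in>{1..n2}. 0 \<le> M i j \<and> M i j \<le> 1"
    and cols_mono: "\<forall>i j. 1 \<le> i \<and> i < n1 \<and> j \<in> {1..n2} \<longrightarrow> M i j \<le> M (i + 1) j"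
    and N_pos: "N > 0" and zeta_nonneg: "\<zeta> \<ge> 0"
    and B_sub: "B \<subseteq> {1..n2}" and B_ne: "B \<noteq> {}"
    and edges: "\<forall>u\<in>{1..n1}. \<forall>v\<in>{1..n1}.
        (\<Sum>l\<in>B. M v l) - (\<Sum>l\<in>B. M u l) >
          2 * (16 * (\<zeta> + 1) * (sqrt (real (card B) * real n1 * real n2 / N * ln (real n1 * real n2))
                 + real n1 * real n2 / N * ln (real n1 * real n2)))
        \<longrightarrow> G u v"
    and topo: "topological_sort n1 G \<pi>"
  shows "\<forall>i\<in>{1..n1}. (\<Sum>j\<in>B. \<bar>M (\<pi> i) j - M i j\<bar>)
           \<le> 96 * (\<zeta> + 1) * sqrt (real n1 * real n2 / N * real (card B) * ln (real n1 * real n2))"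
proof
  fix i assume i: "i \<in> {1..n1}"
  define S where "S u = (\<Sum>l\<in>B. M u l)" for u
  define c where "c = real (card B)"
  define x where "x = real n1 * real n2 / N * ln (real n1 * real n2)"
  define T where "T = 2 * (16 * (\<zeta> + 1) * (sqrt (c * x) + x))"
  have finB: "finite B" using B_sub finite_subset by blast
  have c1: "c \<ge> 1" using finB B_ne c_def by (simp add: Suc_leI card_gt_0_iff)
  have n2pos: "n2 \<ge> 1" using B_sub B_ne by auto
  have "1 \<le> n1 * n2" using i n2pos by (simp add: Suc_le_eq)
  then have "real n1 * real n2 \<ge> 1" by (metis of_nat_1 of_nat_le_iff of_nat_mult)
  then have x0: "x \<ge> 0" unfolding x_def using N_pos by simp
  have rhs: "sqrt (real n1 * real n2 / N * real (card B) * ln (real n1 * real n2)) = sqrt (c * x)"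
    unfolding c_def x_def by (simp add: algebra_simps)
  have edges': "\<And>u v. u \<in> {1..n1} \<Longrightarrow> v \<in> {1..n1} \<Longrightarrow> S v - S u > T \<Longrightarrow> G u v"
    using edges unfolding S_def T_def c_def x_def by (simp add: mult.assoc)
  have bij: "bij_betw \<pi> {1..n1} {1..n1}" and tp: "\<And>u v. u \<in> {1..n1} \<Longrightarrow> v \<in> {1..n1} \<Longrightarrow> G u v \<Longrightarrow> \<pi> u < \<pi> v"
    using topo unfolding topological_sort_def by auto
  have inj: "inj_on \<pi> {1..n1}" using bij bij_betw_def by blast
  define k where "k = \<pi> i"
  have k: "k \<in> {1..n1}" using bij i k_def bij_betwE by blast
  have Smono: "\<And>a b. 1 \<le> a \<Longrightarrow> a \<le> b \<Longrightarrow> b \<le> n1 \<Longrightarrow> S a \<le> S b"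
    unfolding S_def using mono_col[OF cols_mono] B_sub by (intro sum_mono) blast
  have up: "S k \<le> S i + T"
  proof (rule ccontr)
    assume "\<not> ?thesis"
    then have h: "S k > S i + T" by simp
    have "\<pi> ` {k..n1} \<subseteq> {k+1..n1}"
    proof
      fix y assume "y \<in> \<pi> ` {k..n1}"
      then obtain v where v: "v \<in> {k..n1}" "y = \<pi> v" by auto
      have v1: "v \<in> {1..n1}" using v k by auto
      have "S v \<ge> S k" using Smono v k by auto
      then have "G i v" using edges' i v1 h by auto
      then have "\<pi> i < \<pi> v" using tp i v1 by auto
      moreover have "\<pi> v \<in> {1..n1}" using bij v1 bij_betwE by blast
      ultimately show "y \<in> {k+1..n1}" using v k_def by auto
    qed
    moreover have "inj_on \<pi> {k..n1}" using inj k by (auto intro: inj_on_subset)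
    ultimately have "card {k..n1} \<le> card {k+1..n1}"
      by (metis card_inj_on_le finite_atLeastAtMost)
    then show False using k by auto
  qed
  have lo: "S k \<ge> S i - T"
  proof (rule ccontr)
    assume "\<not> ?thesis"
    then have h: "S k < S i - T" by simp
    have "\<pi> ` {1..k} \<subseteq> {1..<k}"
    proof
      fix y assume "y \<in> \<pi> ` {1..k}"
      then obtain v where v: "v \<in> {1..k}" "y = \<pi> v" by auto
      have v1: "v \<in> {1..n1}" using v k by auto
      have "S v \<le> S k" using Smono v k by auto
      then have "G v i" using edges' i v1 h by auto
      then have "\<pi> v < \<pi> i" using tp i v1 by auto
      moreover have "\<pi> v \<in> {1..n1}" using bij v1 bij_betwE by blast
      ultimately show "y \<in> {1..<k}" using v k_def by auto
    qed
    moreover have "inj_on \<pi> {1..k}" using inj k by (auto intro: inj_on_subset)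
    ultimately have "card {1..k} \<le> card {1..<k}"
      by (metis card_inj_on_le finite_atLeastLessThan)
    then show False using k by auto
  qed
  have diff: "(\<Sum>j\<in>B. \<bar>M k j - M i j\<bar>) \<le> T"
  proof (cases "i \<le> k")
    case True
    then show ?thesis using sum_abs_mono[OF cols_mono _ True _ B_sub] i k up
      unfolding S_def by auto
  next
    case False
    have "(\<Sum>j\<in>B. \<bar>M k j - M i j\<bar>) = (\<Sum>j\<in>B. \<bar>M i j - M k j\<bar>)"
      by (simp add: abs_minus_commute)
    also have "\<dots> = S i - S k" using sum_abs_mono[OF cols_mono _ _ _ B_sub, of k i] i k False
      unfolding S_def by auto
    finally show ?thesis using lo by simp
  qed
  have bound1: "(\<Sum>j\<in>B. \<bar>M k j - M i j\<bar>) \<le> c"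
  proof -
    have "(\<Sum>j\<in>B. \<bar>M k j - M i j\<bar>) \<le> (\<Sum>j\<in>B. 1)"
      apply (rule sum_mono)
      using range01 i k B_sub by (smt (verit) subsetD)
    then show ?thesis unfolding c_def by simp
  qed
  have z1: "\<zeta> + 1 \<ge> 1" using zeta_nonneg by simp
  show "(\<Sum>j\<in>B. \<bar>M (\<pi> i) j - M i j\<bar>) \<le> 96 * (\<zeta> + 1) * sqrt (real n1 * real n2 / N * real (card B) * ln (real n1 * real n2))"
  proof -
  have fin: "(\<Sum>j\<in>B. \<bar>M k j - M i j\<bar>) \<le> 96 * (\<zeta> + 1) * sqrt (c * x)"
  proof (cases "x \<le> c")
    case True
    have "x * x \<le> c * x" using True x0 by (simp add: mult_right_mono)
    then have "x \<le> sqrt (c * x)" using x0 by (metis real_le_rsqrt power2_eq_square)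
    then have "sqrt (c * x) + x \<le> 2 * sqrt (c * x)" by simp
    then have "32 * (\<zeta> + 1) * (sqrt (c * x) + x) \<le> 32 * (\<zeta> + 1) * (2 * sqrt (c * x))"
      using z1 by (intro mult_left_mono) auto
    then have "T \<le> 64 * (\<zeta> + 1) * sqrt (c * x)" unfolding T_def by (simp add: algebra_simps)
    also have "\<dots> \<le> 96 * (\<zeta> + 1) * sqrt (c * x)" using z1 c1 x0 by (intro mult_right_mono) auto
    finally show ?thesis using diff by simp
  next
    case False
    have "c * c \<le> c * x" using False c1 by simp
    then have "c \<le> sqrt (c * x)" using c1 by (metis real_le_rsqrt power2_eq_square)
    also have "\<dots> \<le> 96 * (\<zeta> + 1) * sqrt (c * x)" using z1 c1 x0
      using mult_right_mono[of 1 "96 * (\<zeta> + 1)" "sqrt (c * x)"] by simp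
    finally show ?thesis using bound1 by simp
  qed
  then show ?thesis by (simp only: rhs k_def)
  qed
qed

end
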